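(* Let $P$, $G$, $G_0$ be as in the context, and set $R(z)=(G-z)^{-1}$, $R_0(z)=(G_0-z)^{-1}$, $V=G_0-G$. For every $k\in\mathbb N$, $k\geq1$, and $z\in\mathbb C\setminus\mathbb R$, $R(z)^k$ is a finite sum of terms of the form \[M_0VM_1V\cdots VM_n,\] where $M_0=R_0(z)^{\alpha_0}$, $M_n=R_0(z)^{\alpha_n}$, and for $1\leq j\leq n-1$ either $M_j=R(z)$ (in which case one sets $\alpha_j=1$) or $M_j=R_0(z)^{\alpha_j}$; moreover the integers $\alpha_j$ satisfy, for all $j\in\{0,\dots,n\}$, $0<\alpha_j\leq k$, $\alpha_j+\alpha_{j+1}\leq k+1$ (for $j<n$), and $\sum_{j=0}^n\alpha_j=n+k$.
   Context: On $\mathbb R^d$, $P=-b\,\mathrm{div}(A\nabla b)$ with smooth real $b\geq\delta>0$ and smooth real symmetric $A\geq\delta I_d$, whose coefficients satisfy $|\partial^\alpha(A-I_d)|+|\partial^\alpha(b-1)|\lesssim\langle x\rangle^{-\rho-|\alpha|}$ for some $\rho>0$. $G=i\begin{pmatrix}0&1\\-P&0\end{pmatrix}$, $G_0=i\begin{pmatrix}0&1\\ \Delta&0\end{pmatrix}$, so $V=G_0-G=i\begin{pmatrix}0&0\\P+\Delta&0\end{pmatrix}$, a bounded operator $H^{s+1}\oplus H^s\to H^s\oplus H^{s-1}$. *)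

theory Defs
  imports "HOL-Analysis.Analysis"
begin

text \<open>A factor M_j in a product M_0 V M_1 V ... V M_n: either the perturbed
  resolvent R(z) (exponent alpha_j = 1 by convention) or a power R_0(z)^alpha
  of the free resolvent.\<close>
datatype factor = Res | Res0 nat

fun alpha :: "factor \<Rightarrow> nat" where
  "alpha Res = 1"
| "alpha (Res0 a) = a"

fun factor_op :: "('v \<Rightarrow> 'v) \<Rightarrow> ('v \<Rightarrow> 'v) \<Rightarrow> factor \<Rightarrow> 'v \<Rightarrow> 'v" where
  "factor_op R R0 Res = R"
| "factor_op R R0 (Res0 a) = R0 ^^ a"

fun term_op :: "('v \<Rightarrow> 'v) \<Rightarrow> ('v \<Rightarrow> 'v) \<Rightarrow> ('v \<Rightarrow> 'v) \<Rightarrow> factor list \<Rightarrow> 'v \<Rightarrow> 'v" where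
  "term_op R R0 V [] = id"
| "term_op R R0 V [m] = factor_op R R0 m"
| "term_op R R0 V (m # m' # ms) = factor_op R R0 m \<circ> V \<circ> term_op R R0 V (m' # ms)"

definition admissible_term :: "nat \<Rightarrow> factor list \<Rightarrow> bool" where
  "admissible_term k ms \<longleftrightarrow>
     ms \<noteq> [] \<and>
     (\<exists>a. hd ms = Res0 a) \<and> (\<exists>a. last ms = Res0 a) \<and>
     (\<forall>j < length ms. 0 < alpha (ms ! j) \<and> alpha (ms ! j) \<le> k) \<and>
     (\<forall>j. j + 1 < length ms \<longrightarrow> alpha (ms ! j) + alpha (ms ! (j + 1)) \<le> k + 1) \<and>
     (\<Sum>m\<leftarrow>ms. alpha m) = (length ms - 1) + k"

end

theory Submission
  imports Defs
begin

lemma term_op_Cons: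
  "term_op R R0 V (m # ms) = (if ms = [] then factor_op R R0 m else factor_op R R0 m \<circ> V \<circ> term_op R R0 V ms)"
  by (cases ms) auto

lemma term_op_L1:
  "ys \<noteq> [] \<Longrightarrow> term_op R R0 V (xs @ m # ys) = term_op R R0 V (xs @ [m]) \<circ> V \<circ> term_op R R0 V ys"
  by (induction xs) (auto simp: term_op_Cons o_assoc)

lemma term_op_L2:
  "term_op R R0 V (xs @ [Res0 (Suc a)]) = term_op R R0 V (xs @ [Res0 a]) \<circ> R0"
  by (induction xs) (auto simp: term_op_Cons o_assoc funpow_Suc_right simp del: funpow.simps)

fun pairs_ok :: "nat \<Rightarrow> factor list \<Rightarrow> bool" where
  "pairs_ok k (a # b # r) = (alpha a + alpha b \<le> k + 1 \<and> pairs_ok k (b # r))"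
| "pairs_ok k _ = True"

lemma all_nat_split: "(\<forall>j::nat. P j) \<longleftrightarrow> P 0 \<and> (\<forall>j. P (Suc j))"
  by (metis not0_implies_Suc)

lemma pairs_ok_iff:
  "(\<forall>j. j + 1 < length ms \<longrightarrow> alpha (ms ! j) + alpha (ms ! (j + 1)) \<le> k + 1) \<longleftrightarrow> pairs_ok k ms"
proof (induction k ms rule: pairs_ok.induct)
  case (1 k a b r)
  show ?case
    apply (subst all_nat_split)
    using 1 by simp
next
  case ("2_1" k)
  then show ?case by simp
next
  case ("2_2" k v)
  then show ?case by simp
qed

lemma adm_iff:
  "admissible_term k ms \<longleftrightarrow> ms \<noteq> [] \<and> (\<exists>a. hd ms = Res0 a) \<and> (\<exists>a. last ms = Res0 a) \<and>
     (\<forall>m\<in>set ms. 0 < alpha m \<and> alpha m \<le> k) \<and> pairs_ok k ms \<and>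
     sum_list (map alpha ms) = length ms - 1 + k"
  unfolding admissible_term_def pairs_ok_iff[symmetric]
  by (simp add: all_set_conv_all_nth)

lemma pairs_ext:
  "pairs_ok k (xs @ [b]) \<Longrightarrow> alpha b' \<le> Suc (alpha b) \<Longrightarrow> pairs_ok (Suc k) (b' # ys)
   \<Longrightarrow> pairs_ok (Suc k) (xs @ b' # ys)"
proof (induction xs)
  case Nil
  then show ?case by simp
next
  case (Cons x xs)
  then show ?case by (cases xs) auto
qed

lemma adm_ext:
  assumes "admissible_term k (xs @ [Res0 a])"
    and "\<forall>m\<in>set ys. alpha m = 1" and "ys = [] \<or> (\<exists>c. last ys = Res0 c)"
    and "pairs_ok (Suc k) (Res0 (Suc a) # ys)"
    and "sum_list (map alpha ys) = length ys"
  shows "admissible_term (Suc k) (xs @ Res0 (Suc a) # ys)"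
proof -
  from assms(1) have A: "(\<exists>c. hd (xs @ [Res0 a]) = Res0 c)"
    "\<forall>m\<in>set (xs @ [Res0 a]). 0 < alpha m \<and> alpha m \<le> k"
    "pairs_ok k (xs @ [Res0 a])" "sum_list (map alpha (xs @ [Res0 a])) = length xs + k"
    by (auto simp: adm_iff)
  have "pairs_ok (Suc k) (xs @ Res0 (Suc a) # ys)"
    using pairs_ext[OF A(3) _ assms(4)] by simp
  moreover have "\<exists>c. hd (xs @ Res0 (Suc a) # ys) = Res0 c"
    using A(1) by (cases xs) auto
  moreover have "\<exists>c. last (xs @ Res0 (Suc a) # ys) = Res0 c"
    using assms(3) by auto
  moreover have "\<forall>m\<in>set (xs @ Res0 (Suc a) # ys). 0 < alpha m \<and> alpha m \<le> Suc k"
  proof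
    fix m assume "m \<in> set (xs @ Res0 (Suc a) # ys)"
    then consider "m \<in> set xs" | "m = Res0 (Suc a)" | "m \<in> set ys" by auto
    then show "0 < alpha m \<and> alpha m \<le> Suc k"
    proof cases
      case 1 then show ?thesis using A(2) by auto
    next
      case 2 then show ?thesis using A(2) by auto
    next
      case 3 then show ?thesis using assms(2) by auto
    qed
  qed
  moreover have "sum_list (map alpha (xs @ Res0 (Suc a) # ys)) = length (xs @ Res0 (Suc a) # ys) - 1 + Suc k"
    using A(4) assms(5) by simp
  ultimately show ?thesis unfolding adm_iff by blast
qed

locale lsetting = module sc for sc :: "complex \<Rightarrow> 'v::ab_group_add \<Rightarrow> 'v" +
  fixes H D :: "'v set" and G G0 R R0 :: "'v \<Rightarrow> 'v" and z :: complex
  assumes Hs: "subspace H" and Ds: "subspace D" and DH: "D \<subseteq> H"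
    and Gadd: "\<forall>a\<in>D. \<forall>b\<in>D. G (a + b) = G a + G b"
    and G0add: "\<forall>a\<in>D. \<forall>b\<in>D. G0 (a + b) = G0 a + G0 b"
    and GD: "G ` D \<subseteq> H" and G0D: "G0 ` D \<subseteq> H"
    and RH: "R ` H \<subseteq> D" and R1: "\<forall>x\<in>H. G (R x) - sc z (R x) = x" and R2: "\<forall>y\<in>D. R (G y - sc z y) = y"
    and R0H: "R0 ` H \<subseteq> D" and R01: "\<forall>x\<in>H. G0 (R0 x) - sc z (R0 x) = x" and R02: "\<forall>y\<in>D. R0 (G0 y - sc z y) = y"
begin

abbreviation Vop where "Vop \<equiv> \<lambda>y. G0 y - G y"

lemma inv_add:
  assumes FH: "F ` H \<subseteq> D" and F1: "\<forall>x\<in>H. A (F x) - sc z (F x) = x"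
    and F2: "\<forall>y\<in>D. F (A y - sc z y) = y" and Aadd: "\<forall>a\<in>D. \<forall>b\<in>D. A (a + b) = A a + A b"
    and x: "x \<in> H" and y: "y \<in> H"
  shows "F (x + y) = F x + F y"
proof -
  have Fx: "F x \<in> D" "F y \<in> D" using FH x y by auto
  have "x + y = (A (F x) - sc z (F x)) + (A (F y) - sc z (F y))" using F1 x y by simp
  also have "\<dots> = A (F x + F y) - sc z (F x + F y)" using Aadd Fx by (simp add: scale_right_distrib algebra_simps)
  finally have "F (x + y) = F (A (F x + F y) - sc z (F x + F y))" by simp
  also have "\<dots> = F x + F y" using F2 Fx subspace_add[OF Ds] by simp
  finally show ?thesis .
qed

lemma R_add: "x \<in> H \<Longrightarrow> y \<in> H \<Longrightarrow> R (x + y) = R x + R y"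
  using inv_add[OF RH R1 R2 Gadd] by blast

lemma R0_add: "x \<in> H \<Longrightarrow> y \<in> H \<Longrightarrow> R0 (x + y) = R0 x + R0 y"
  using inv_add[OF R0H R01 R02 G0add] by blast

lemma add_diff:
  fixes f :: "'v \<Rightarrow> 'v"
  assumes "\<forall>x\<in>H. \<forall>y\<in>H. f (x + y) = f x + f y" "x \<in> H" "y \<in> H"
  shows "f (x - y) = f x - f y"
proof -
  have "x - y \<in> H" using subspace_diff[OF Hs] assms by blast
  then have "f ((x - y) + y) = f (x - y) + f y" using assms by blast
  then have "f x = f (x - y) + f y" by simp
  then show ?thesis by (simp add: eq_diff_eq)
qed

lemma R_diff: "x \<in> H \<Longrightarrow> y \<in> H \<Longrightarrow> R (x - y) = R x - R y"
  by (rule add_diff) (auto simp: R_add)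

lemma R0_diff: "x \<in> H \<Longrightarrow> y \<in> H \<Longrightarrow> R0 (x - y) = R0 x - R0 y"
  by (rule add_diff) (auto simp: R0_add)

lemma V_H: "y \<in> D \<Longrightarrow> Vop y \<in> H"
  using GD G0D subspace_diff[OF Hs] by blast

lemma V_add: "a \<in> D \<Longrightarrow> b \<in> D \<Longrightarrow> Vop (a + b) = Vop a + Vop b"
  using Gadd G0add by (simp add: algebra_simps)

lemma scH: "y \<in> D \<Longrightarrow> sc z y \<in> H"
  using DH subspace_scale[OF Ds] by blast

lemma id1: "x \<in> H \<Longrightarrow> R x = R0 x + R0 (Vop (R x))"
proof -
  assume x: "x \<in> H"
  define y where "y = R x"
  have y: "y \<in> D" using RH x y_def by auto
  have e: "G0 y - G y = (G0 y - sc z y) - x" using R1 x y_def by (simp add: algebra_simps)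
  have h: "G0 y - sc z y \<in> H" using G0D y scH subspace_diff[OF Hs] by blast
  have "R0 (G0 y - G y) = R0 (G0 y - sc z y) - R0 x" unfolding e by (rule R0_diff[OF h x])
  then have "R0 (Vop y) = y - R0 x" using R02 y by simp
  then show ?thesis using y_def by simp
qed

lemma id2: "y \<in> H \<Longrightarrow> R y = R0 y + R (Vop (R0 y))"
proof -
  assume y: "y \<in> H"
  define w where "w = R0 y"
  have w: "w \<in> D" using R0H y w_def by auto
  have e: "G0 w - G w = y - (G w - sc z w)" using R01 y w_def by (simp add: algebra_simps)
  have h: "G w - sc z w \<in> H" using GD w scH subspace_diff[OF Hs] by blast
  have "R (G0 w - G w) = R y - R (G w - sc z w)" unfolding e by (rule R_diff[OF y h])
  then have "R (Vop w) = R y - w" using R2 w by simp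
  then show ?thesis using w_def by simp
qed

lemma id3: "x \<in> H \<Longrightarrow> R x = R0 x + R0 (Vop (R0 x)) + R0 (Vop (R (Vop (R0 x))))"
proof -
  assume x: "x \<in> H"
  have a: "R0 x \<in> D" using R0H x by auto
  have b: "R (Vop (R0 x)) \<in> D" using RH V_H[OF a] by auto
  have "R x = R0 x + R0 (Vop (R0 x + R (Vop (R0 x))))" using id1[OF x] id2[OF x] by simp
  also have "\<dots> = R0 x + R0 (Vop (R0 x)) + R0 (Vop (R (Vop (R0 x))))"
    using V_add[OF a b] R0_add[OF V_H[OF a] V_H[OF b]] by (simp add: add.assoc)
  finally show ?thesis .
qed

lemma R0D: "x \<in> H \<Longrightarrow> R0 x \<in> D" using R0H by blast
lemma R0HH: "x \<in> H \<Longrightarrow> R0 x \<in> H" using R0H DH by blast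
lemma RD: "x \<in> H \<Longrightarrow> R x \<in> D" using RH by blast
lemma RHH: "x \<in> H \<Longrightarrow> R x \<in> H" using RH DH by blast
lemma VHH: "x \<in> H \<Longrightarrow> Vop (R0 x) \<in> H" using V_H R0D by blast

lemma pow_ok: "(\<forall>x\<in>H. (R0 ^^ a) x \<in> H) \<and> (0 < a \<longrightarrow> (\<forall>x\<in>H. (R0 ^^ a) x \<in> D)) \<and>
   (\<forall>x\<in>H. \<forall>y\<in>H. (R0 ^^ a) (x + y) = (R0 ^^ a) x + (R0 ^^ a) y)"
proof (induction a)
  case 0
  then show ?case by simp
next
  case (Suc a)
  then show ?case using R0D R0HH R0_add by auto
qed

lemma factor_ok: "0 < alpha m \<Longrightarrow> (\<forall>x\<in>H. factor_op R R0 m x \<in> D) \<and>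
   (\<forall>x\<in>H. \<forall>y\<in>H. factor_op R R0 m (x + y) = factor_op R R0 m x + factor_op R R0 m y)"
  using pow_ok RH R_add by (cases m) auto

lemma term_ok: "t \<noteq> [] \<Longrightarrow> \<forall>m\<in>set t. 0 < alpha m \<Longrightarrow> (\<forall>x\<in>H. term_op R R0 Vop t x \<in> D) \<and>
   (\<forall>x\<in>H. \<forall>y\<in>H. term_op R R0 Vop t (x + y) = term_op R R0 Vop t x + term_op R R0 Vop t y)"
proof (induction t)
  case Nil
  then show ?case by simp
next
  case (Cons m ms)
  have f: "(\<forall>x\<in>H. factor_op R R0 m x \<in> D) \<and>
   (\<forall>x\<in>H. \<forall>y\<in>H. factor_op R R0 m (x + y) = factor_op R R0 m x + factor_op R R0 m y)"
    using factor_ok Cons.prems by simp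
  show ?case
  proof (cases "ms = []")
    case True
    then show ?thesis using f by simp
  next
    case False
    then have ih: "(\<forall>x\<in>H. term_op R R0 Vop ms x \<in> D) \<and>
      (\<forall>x\<in>H. \<forall>y\<in>H. term_op R R0 Vop ms (x + y) = term_op R R0 Vop ms x + term_op R R0 Vop ms y)"
      using Cons by simp
    show ?thesis
    proof (intro conjI ballI)
      fix x assume x: "x \<in> H"
      show "term_op R R0 Vop (m # ms) x \<in> D"
        using False f ih x V_H by (simp add: term_op_Cons)
    next
      fix x y assume x: "x \<in> H" and y: "y \<in> H"
      have tx: "term_op R R0 Vop ms x \<in> D" "term_op R R0 Vop ms y \<in> D" using ih x y by auto
      show "term_op R R0 Vop (m # ms) (x + y) = term_op R R0 Vop (m # ms) x + term_op R R0 Vop (m # ms) y"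
        using False ih x y tx V_add[OF tx] f V_H[OF tx(1)] V_H[OF tx(2)]
        by (simp add: term_op_Cons)
    qed
  qed
qed

lemma split_term:
  assumes xs: "\<forall>m\<in>set xs. 0 < alpha m" and a: "0 < a" and x: "x \<in> H"
  shows "term_op R R0 Vop (xs @ [Res0 a]) (R x) =
    term_op R R0 Vop (xs @ [Res0 (Suc a)]) x + term_op R R0 Vop (xs @ [Res0 (Suc a), Res0 1]) x
    + term_op R R0 Vop (xs @ [Res0 (Suc a), Res, Res0 1]) x"
proof -
  let ?T = "term_op R R0 Vop (xs @ [Res0 a])"
  have ok: "\<forall>x\<in>H. \<forall>y\<in>H. ?T (x + y) = ?T x + ?T y"
    using term_ok[of "xs @ [Res0 a]"] xs a by auto
  have p: "R0 x \<in> H" using R0H DH x by auto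
  have q: "R0 (Vop (R0 x)) \<in> H" using R0HH VHH x by blast
  have r: "R0 (Vop (R (Vop (R0 x)))) \<in> H" using R0HH V_H RD VHH x by blast
  have pq: "R0 x + R0 (Vop (R0 x)) \<in> H" using subspace_add[OF Hs p q] .
  have "?T (R x) = ?T (R0 x) + ?T (R0 (Vop (R0 x))) + ?T (R0 (Vop (R (Vop (R0 x)))))"
    using id3[OF x] ok p q r pq by simp
  moreover have "term_op R R0 Vop (xs @ [Res0 (Suc a), Res0 1]) x = ?T (R0 (Vop (R0 x)))"
    using term_op_L1[of "[Res0 1]" R R0 Vop xs "Res0 (Suc a)"] term_op_L2[of R R0 Vop xs a] by simp
  moreover have "term_op R R0 Vop (xs @ [Res0 (Suc a), Res, Res0 1]) x = ?T (R0 (Vop (R (Vop (R0 x)))))"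
    using term_op_L1[of "[Res, Res0 1]" R R0 Vop xs "Res0 (Suc a)"] term_op_L2[of R R0 Vop xs a] by simp
  moreover have "term_op R R0 Vop (xs @ [Res0 (Suc a)]) x = ?T (R0 x)"
    using term_op_L2[of R R0 Vop xs a] by simp
  ultimately show ?thesis by (simp only:)
qed

definition bump :: "factor list \<Rightarrow> factor list" where
  "bump t = butlast t @ [Res0 (Suc (alpha (last t)))]"

definition ext :: "factor list \<Rightarrow> factor list list" where
  "ext t = [bump t, bump t @ [Res0 1], bump t @ [Res, Res0 1]]"

lemma sum_concat: "(\<Sum>t\<leftarrow>concat (map ext ts). f t) = (\<Sum>t\<leftarrow>ts. (\<Sum>u\<leftarrow>ext t. f u))"
  by (induction ts) auto

lemma main: "1 \<le> k \<Longrightarrow> \<exists>ts. (\<forall>t\<in>set ts. admissible_term k t) \<and>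
           (\<forall>x\<in>H. (R ^^ k) x = (\<Sum>t\<leftarrow>ts. term_op R R0 Vop t x))"
proof (induction k rule: nat_induct_at_least)
  case base
  have "\<forall>t\<in>set [[Res0 1], [Res0 1, Res0 1], [Res0 1, Res, Res0 1]]. admissible_term 1 t"
      by (simp add: adm_iff)
  moreover have "\<forall>x\<in>H. (R ^^ 1) x = (\<Sum>t\<leftarrow>[[Res0 1], [Res0 1, Res0 1], [Res0 1, Res, Res0 1]]. term_op R R0 Vop t x)"
      using id3 by (simp add: add.assoc)
  ultimately show ?case by blast
next
  case (Suc n)
  then obtain ts where ad: "\<forall>t\<in>set ts. admissible_term n t"
    and eq: "\<forall>x\<in>H. (R ^^ n) x = (\<Sum>t\<leftarrow>ts. term_op R R0 Vop t x)" by blast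
  have dec: "t = butlast t @ [Res0 (alpha (last t))] \<and> 0 < alpha (last t) \<and> (\<forall>m\<in>set (butlast t). 0 < alpha m)"
    if "t \<in> set ts" for t
  proof -
    have A: "t \<noteq> []" "\<exists>c. last t = Res0 c" "\<forall>m\<in>set t. 0 < alpha m"
      using ad that by (auto simp: adm_iff)
    then obtain c where c: "last t = Res0 c" by blast
    have "t = butlast t @ [last t]" using A(1) by simp
    then show ?thesis using c A(3) by (metis alpha.simps(2) in_set_butlastD last_in_set A(1))
  qed
  have "\<forall>t\<in>set (concat (map ext ts)). admissible_term (Suc n) t"
    proof
      fix u assume "u \<in> set (concat (map ext ts))"
      then obtain t where t: "t \<in> set ts" and u: "u \<in> set (ext t)" by auto
      have d: "t = butlast t @ [Res0 (alpha (last t))]" using dec[OF t] by blast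
      have at: "admissible_term n (butlast t @ [Res0 (alpha (last t))])" using ad t d by simp
      have bnd: "alpha (last t) \<le> n" using ad t d by (auto simp: adm_iff)
      let ?b = "butlast t" and ?a = "alpha (last t)"
      have h1: "admissible_term (Suc n) (?b @ [Res0 (Suc ?a)])"
        using adm_ext[OF at, of "[]"] by simp
      have h2: "admissible_term (Suc n) (?b @ [Res0 (Suc ?a), Res0 1])"
        using adm_ext[OF at, of "[Res0 1]"] bnd by simp
      have h3: "admissible_term (Suc n) (?b @ [Res0 (Suc ?a), Res, Res0 1])"
        using adm_ext[OF at, of "[Res, Res0 1]"] bnd by simp
      show "admissible_term (Suc n) u" using u h1 h2 h3 unfolding ext_def bump_def by auto
    qed
  moreover have "(R ^^ Suc n) x = (\<Sum>t\<leftarrow>concat (map ext ts). term_op R R0 Vop t x)" if x: "x \<in> H" for x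
  proof -
    have Rx: "R x \<in> H" using RH DH x by auto
    have "(R ^^ Suc n) x = (\<Sum>t\<leftarrow>ts. term_op R R0 Vop t (R x))"
      using eq Rx by (simp add: funpow_Suc_right del: funpow.simps)
    also have "\<dots> = (\<Sum>t\<leftarrow>ts. (\<Sum>u\<leftarrow>ext t. term_op R R0 Vop u x))"
    proof (rule arg_cong[where f = sum_list], rule map_cong[OF refl])
      fix t assume t: "t \<in> set ts"
      have d: "t = butlast t @ [Res0 (alpha (last t))]" "0 < alpha (last t)"
        "\<forall>m\<in>set (butlast t). 0 < alpha m" using dec[OF t] by auto
      have "term_op R R0 Vop t (R x) = term_op R R0 Vop (butlast t @ [Res0 (alpha (last t))]) (R x)"
        using d(1) by simp
      also have "\<dots> = (\<Sum>u\<leftarrow>ext t. term_op R R0 Vop u x)"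
        using split_term[OF d(3) d(2) x] unfolding ext_def bump_def by (simp add: add.assoc)
      finally show "term_op R R0 Vop t (R x) = (\<Sum>u\<leftarrow>ext t. term_op R R0 Vop u x)" .
    qed
    also have "\<dots> = (\<Sum>t\<leftarrow>concat (map ext ts). term_op R R0 Vop t x)"
      by (rule sum_concat[symmetric])
    finally show ?thesis .
  qed
  ultimately show ?case by blast
qed

end

theorem lemma4p2:
  fixes sc :: "complex \<Rightarrow> 'v::ab_group_add \<Rightarrow> 'v"
    and H D :: "'v set"
    and G G0 R R0 :: "'v \<Rightarrow> 'v"
    and z :: complex and k :: nat
  assumes "module sc"
    and "module.subspace sc H" and "module.subspace sc D" and "D \<subseteq> H"
    and "\<forall>a\<in>D. \<forall>b\<in>D. G (a + b) = G a + G b" and "\<forall>c. \<forall>a\<in>D. G (sc c a) = sc c (G a)"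
    and "\<forall>a\<in>D. \<forall>b\<in>D. G0 (a + b) = G0 a + G0 b" and "\<forall>c. \<forall>a\<in>D. G0 (sc c a) = sc c (G0 a)"
    and "G ` D \<subseteq> H" and "G0 ` D \<subseteq> H"
    and "Im z \<noteq> 0"
    and "R ` H \<subseteq> D" and "\<forall>x\<in>H. G (R x) - sc z (R x) = x" and "\<forall>y\<in>D. R (G y - sc z y) = y"
    and "R0 ` H \<subseteq> D" and "\<forall>x\<in>H. G0 (R0 x) - sc z (R0 x) = x" and "\<forall>y\<in>D. R0 (G0 y - sc z y) = y"
    and "k \<ge> 1"
  shows "\<exists>ts. (\<forall>t\<in>set ts. admissible_term k t) \<and>
           (\<forall>x\<in>H. (R ^^ k) x = (\<Sum>t\<leftarrow>ts. term_op R R0 (\<lambda>y. G0 y - G y) t x))"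
proof -
  interpret L: lsetting sc H D G G0 R R0 z
    using assms by (simp add: lsetting_def lsetting_axioms_def)
  show ?thesis using L.main assms(18) by blast
qed

end
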